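(* Let $\beta=\beta_n>0$, $p_1=p_1(n)\ge n$, $p_2=p_2(n)\ge n$, $p=p_1+p_2$, and suppose that as $n\to\infty$, $n/p_1\to0$, $p_1/p_2\to\sigma\in[0,\infty)$ and $\beta n\to\infty$. Then $$\log A_n^{p_1,p_2}=\frac{\beta p_1}{2}\log\frac{p}{p_1}+\frac{\beta p_2}{2}\log\frac{p}{p_2}+\frac{\beta(n-1)}{2}\log\frac{p}{n}+\frac12\log(\beta p_1)+\frac12\beta n+o(\beta n).$$
   Context: $$A_n^{p_1,p_2}=\frac{\Gamma(1+\frac\beta2)\Gamma(\frac{\beta p}{2})\Gamma(\frac{\beta(p-1)}{2})}{\Gamma(1+\frac{\beta n}{2})\Gamma(\frac{\beta p_1}{2})\Gamma(\frac{\beta p_2}{2})\Gamma(\frac{\beta(p-n)}{2})}.$$ *)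

theory Defs
  imports "HOL-Analysis.Analysis" "HOL-Library.Landau_Symbols"
begin

definition A_const :: "real \<Rightarrow> nat \<Rightarrow> nat \<Rightarrow> nat \<Rightarrow> real" where
  "A_const \<beta> n p1 p2 =
     (let p = real p1 + real p2 in
      Gamma (1 + \<beta> / 2) * Gamma (\<beta> * p / 2) * Gamma (\<beta> * (p - 1) / 2) /
      (Gamma (1 + \<beta> * real n / 2) * Gamma (\<beta> * real p1 / 2) * Gamma (\<beta> * real p2 / 2)
       * Gamma (\<beta> * (p - real n) / 2)))"

end

theory Submission
  imports Defs "HOL-Real_Asymp.Real_Asymp"
begin


lemma ln_upper3:
  fixes u :: real assumes "u \<ge> 0"
  shows "ln (1 + u) \<le> u - u^2/2 + u^3/3"
proof -
  have "(\<lambda>t. ln (1 + t) - (t - t^2/2 + t^3/3)) 0 \<ge> (\<lambda>t. ln (1 + t) - (t - t^2/2 + t^3/3)) u"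
  proof (rule DERIV_nonpos_imp_decreasing_open[OF assms])
    fix t :: real assume t: "0 < t" "t < u"
    have "DERIV (\<lambda>t. ln (1 + t) - (t - t^2/2 + t^3/3)) t :> (1/(1+t) - (1 - t + t^2))"
      using t by (auto intro!: derivative_eq_intros simp: power2_eq_square)
    moreover have "1/(1+t) - (1 - t + t^2) \<le> 0"
    proof -
      have "1 \<le> (1+t)*(1 - t + t^2)" using t by (simp add: algebra_simps power2_eq_square power3_eq_cube)
      thus ?thesis using t by (simp add: field_simps)
    qed
    ultimately show "\<exists>y. DERIV (\<lambda>t. ln (1 + t) - (t - t^2/2 + t^3/3)) t :> y \<and> y \<le> 0" by blast
  next
    show "continuous_on {0..u} (\<lambda>t. ln (1 + t) - (t - t^2/2 + t^3/3))"
      by (intro continuous_intros) auto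
  qed
  thus ?thesis by simp
qed

lemma ln_lower4:
  fixes u :: real assumes "u \<ge> 0"
  shows "u - u^2/2 + u^3/3 - u^4/4 \<le> ln (1 + u)"
proof -
  have "(\<lambda>t. ln (1 + t) - (t - t^2/2 + t^3/3 - t^4/4)) 0 \<le> (\<lambda>t. ln (1 + t) - (t - t^2/2 + t^3/3 - t^4/4)) u"
  proof (rule DERIV_nonneg_imp_increasing_open[OF assms])
    fix t :: real assume t: "0 < t" "t < u"
    have "DERIV (\<lambda>t. ln (1 + t) - (t - t^2/2 + t^3/3 - t^4/4)) t :> (1/(1+t) - (1 - t + t^2 - t^3))"
      using t by (auto intro!: derivative_eq_intros simp: power2_eq_square power3_eq_cube)
    moreover have "1/(1+t) - (1 - t + t^2 - t^3) \<ge> 0"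
    proof -
      have "1 \<ge> (1+t)*(1 - t + t^2 - t^3)" using t by (simp add: algebra_simps power2_eq_square power3_eq_cube power4_eq_xxxx)
      thus ?thesis using t by (simp add: field_simps)
    qed
    ultimately show "\<exists>y. DERIV (\<lambda>t. ln (1 + t) - (t - t^2/2 + t^3/3 - t^4/4)) t :> y \<and> y \<ge> 0" by blast
  next
    show "continuous_on {0..u} (\<lambda>t. ln (1 + t) - (t - t^2/2 + t^3/3 - t^4/4))"
      by (intro continuous_intros) auto
  qed
  thus ?thesis by simp
qed

lemma step_bound:
  fixes z :: real assumes z: "z \<ge> 1"
  shows "\<bar>1 - (z + 1/2) * ln (1 + 1/z)\<bar> \<le> 2/z - 2/(z+1)"
proof -
  define u where "u = 1/z"
  have u: "0 < u" "u \<le> 1" using z by (auto simp: u_def)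
  have zu: "z = 1/u" using z by (simp add: u_def)
  have up: "ln (1+u) \<le> u - u^2/2 + u^3/3" using ln_upper3 u by simp
  have lo: "u - u^2/2 + u^3/3 - u^4/4 \<le> ln (1+u)" using ln_lower4 u by simp
  have e: "(z + 1/2) = (2 + u)/(2*u)" using u by (simp add: zu field_simps)
  have pos: "(2+u)/(2*u) > 0" using u by simp
  have A: "(z + 1/2) * ln (1 + 1/z) \<le> (2+u)/(2*u) * (u - u^2/2 + u^3/3)"
    unfolding e u_def[symmetric] using mult_left_mono[OF up less_imp_le[OF pos]] by simp
  have B: "(2+u)/(2*u) * (u - u^2/2 + u^3/3 - u^4/4) \<le> (z + 1/2) * ln (1 + 1/z)"
    unfolding e u_def[symmetric] using mult_left_mono[OF lo less_imp_le[OF pos]] by simp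
  have A': "(2+u)/(2*u) * (u - u^2/2 + u^3/3) = 1 + u^2/12 + u^3/6"
    using u by (simp add: field_simps power2_eq_square power3_eq_cube)
  have B': "(2+u)/(2*u) * (u - u^2/2 + u^3/3 - u^4/4) = 1 + u^2/12 - u^3/12 - u^4/8"
    using u by (simp add: field_simps power2_eq_square power3_eq_cube power4_eq_xxxx)
  have r: "2/z - 2/(z+1) = 2*u^2/(1+u)"
    using u by (simp add: zu field_simps power2_eq_square)
  have u3: "u^3 \<le> u^2" "u^4 \<le> u^2" using u by (auto intro: power_decreasing)
  have "u^2/4 \<le> 2*u^2/(1+u)" using u by (simp add: field_simps)
  show ?thesis unfolding r using A B A' B' u3 \<open>u^2/4 \<le> 2*u^2/(1+u)\<close> u
    by (simp add: abs_le_iff)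
qed

definition gS :: "real \<Rightarrow> real" where
  "gS z = ln (Gamma z) - ((z - 1/2) * ln z - z)"

lemma gS_step:
  fixes z :: real assumes z: "z \<ge> 1"
  shows "\<bar>gS (z+1) - gS z\<bar> \<le> 2/z - 2/(z+1)"
proof -
  have nz: "z \<notin> \<int>\<^sub>\<le>\<^sub>0" using z by auto
  have G: "Gamma (z+1) = z * Gamma z" using Gamma_plus1[OF nz] .
  have gp: "Gamma z > 0" using z by simp
  have l1: "ln (Gamma (z+1)) = ln z + ln (Gamma z)" unfolding G using gp z by (intro ln_mult_pos) auto
  have "1 + 1/z = (z+1)/z" using z by (simp add: field_simps)
  hence l2: "ln (1 + 1/z) = ln (z+1) - ln z" using z by (simp add: ln_div)
  have "gS (z+1) - gS z = 1 - (z + 1/2) * ln (1 + 1/z)"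
    unfolding gS_def l1 l2 by (simp add: algebra_simps)
  thus ?thesis using step_bound[OF z] by simp
qed

lemma gS_bounded: "\<exists>C. \<forall>z::real. z \<ge> 1 \<longrightarrow> \<bar>gS z\<bar> \<le> C"
proof -
  have cont: "continuous_on {1..2} gS"
    unfolding gS_def
    by (intro continuous_intros continuous_on_Gamma) (auto, metis Gamma_real_pos less_irrefl less_le_trans zero_less_one)
  have "bounded (gS ` {1..2})"
    by (rule compact_imp_bounded[OF compact_continuous_image[OF cont compact_Icc]])
  then obtain B where B: "\<And>z. z \<in> {1..2} \<Longrightarrow> \<bar>gS z\<bar> \<le> B"
    unfolding bounded_iff by (auto simp del: atLeastAtMost_iff)
  have main: "\<forall>z. 1 \<le> z \<and> z \<le> real k + 2 \<longrightarrow> \<bar>gS z\<bar> \<le> B + 2 - 2/z" for k :: nat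
  proof (induction k)
    case 0
    show ?case
    proof (intro allI impI)
      fix z :: real assume "1 \<le> z \<and> z \<le> real 0 + 2"
      hence "z \<in> {1..2}" "2 - 2/z \<ge> 0" by (auto simp: field_simps)
      thus "\<bar>gS z\<bar> \<le> B + 2 - 2/z" using B by fastforce
    qed
  next
    case (Suc k)
    show ?case
    proof (intro allI impI)
      fix z :: real assume zz: "1 \<le> z \<and> z \<le> real (Suc k) + 2"
      show "\<bar>gS z\<bar> \<le> B + 2 - 2/z"
      proof (cases "z \<le> 2")
        case True
        hence "z \<in> {1..2}" "2 - 2/z \<ge> 0" using zz by (auto simp: field_simps)
        thus ?thesis using B by fastforce
      next
        case False
        have h: "\<bar>gS (z-1)\<bar> \<le> B + 2 - 2/(z-1)" using Suc.IH zz False by auto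
        have s: "\<bar>gS (z-1+1) - gS (z-1)\<bar> \<le> 2/(z-1) - 2/(z-1+1)"
          using gS_step[of "z-1"] False by simp
        show ?thesis using h s by simp
      qed
    qed
  qed
  show ?thesis
  proof (intro exI allI impI)
    fix z :: real assume z: "z \<ge> 1"
    have "z \<le> real (nat \<lceil>z\<rceil>) + 2" by linarith
    hence "\<bar>gS z\<bar> \<le> B + 2 - 2/z" using main z by blast
    moreover have "2/z \<ge> 0" using z by simp
    ultimately show "\<bar>gS z\<bar> \<le> B + 2" by linarith
  qed
qed



lemma identity:
  fixes x N P1 P2 P :: real
  assumes x: "x > 0" and N: "N \<ge> 1" and P1: "P1 \<ge> N" and P2: "P2 \<ge> N" and P: "P = P1 + P2"
  shows "ln (Gamma (1+x)) + ln (Gamma (x*P)) + ln (Gamma (x*(P-1))) - (ln (Gamma (x*N)) + ln (x*N))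
        - ln (Gamma (x*P1)) - ln (Gamma (x*P2)) - ln (Gamma (x*(P-N)))
     - (2*x * P1 / 2 * ln (P / P1) + 2*x * P2 / 2 * ln (P / P2) + 2*x * (N - 1) / 2 * ln (P / N)
        + 1/2 * ln (2*x * P1) + 1/2 * (2*x) * N)
   = (gS (x*P) + gS (x*(P-1)) - gS (x*N) - gS (x*P1) - gS (x*P2) - gS (x*(P-N)))
     + x * (((P-1) * ln (P-1) - (P-N) * ln (P-N) - (N-1) * ln P) - N)
     + (ln (Gamma (1+x)) - x * ln x + x - 1/2 * ln N - 1/2 * ln x)
     - x * ln N + 1/2 * ln (P2/P) + 1/2 * ln ((P-N)/(P-1)) - 1/2 * ln 2"
proof -
  have pos: "P1 > 0" "P2 > 0" "P > 0" "P - 1 > 0" "P - N > 0" "N > 0" using assms by auto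
  have l: "ln (x*P) = ln x + ln P" "ln (x*(P-1)) = ln x + ln (P-1)" "ln (x*N) = ln x + ln N"
    "ln (x*P1) = ln x + ln P1" "ln (x*P2) = ln x + ln P2" "ln (x*(P-N)) = ln x + ln (P-N)"
    "ln (P/P1) = ln P - ln P1" "ln (P/P2) = ln P - ln P2" "ln (P/N) = ln P - ln N"
    "ln (2*x*P1) = ln 2 + ln x + ln P1" "ln (P2/P) = ln P2 - ln P"
    "ln ((P-N)/(P-1)) = ln (P-N) - ln (P-1)"
    using pos x by (simp_all add: ln_mult_pos ln_divide_pos)
  show ?thesis unfolding gS_def unfolding l unfolding P by (simp add: algebra_simps add_divide_distrib diff_divide_distrib)
qed

lemma ln_diff_bounds:
  fixes a b :: real assumes "a > 0" "b > 0"
  shows "1 - b/a \<le> ln a - ln b" "ln a - ln b \<le> a/b - 1"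
proof -
  have "ln (b/a) \<le> b/a - 1" using assms by (intro ln_le_minus_one) simp
  thus "1 - b/a \<le> ln a - ln b" using assms by (simp add: ln_divide_pos)
  have "ln (a/b) \<le> a/b - 1" using assms by (intro ln_le_minus_one) simp
  thus "ln a - ln b \<le> a/b - 1" using assms by (simp add: ln_divide_pos)
qed

lemma W_bounds:
  fixes N P :: real assumes N: "N \<ge> 1" and P: "P \<ge> 2*N"
  shows "\<bar>((P-1) * ln (P-1) - (P-N) * ln (P-N) - (N-1) * ln P) - N\<bar> \<le> 1 + N^2/P"
proof -
  have p: "P - 1 > 0" "P - N > 0" "P > 0" using assms by auto
  have e: "(P-1) * ln (P-1) - (P-N) * ln (P-N) - (N-1) * ln P
      = (P-1) * (ln (P-1) - ln P) + (P-N) * (ln P - ln (P-N))" by (simp add: algebra_simps)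
  have a1: "(P-1) * (ln (P-1) - ln P) \<ge> (P-1) * (1 - P/(P-1))"
    using ln_diff_bounds(1)[of "P-1" P] p by (intro mult_left_mono) auto
  have a2: "(P-1) * (ln (P-1) - ln P) \<le> (P-1) * ((P-1)/P - 1)"
    using ln_diff_bounds(2)[of "P-1" P] p by (intro mult_left_mono) auto
  have b1: "(P-N) * (ln P - ln (P-N)) \<ge> (P-N) * (1 - (P-N)/P)"
    using ln_diff_bounds(1)[of P "P-N"] p by (intro mult_left_mono) auto
  have b2: "(P-N) * (ln P - ln (P-N)) \<le> (P-N) * (P/(P-N) - 1)"
    using ln_diff_bounds(2)[of P "P-N"] p by (intro mult_left_mono) auto
  have c1: "(P-1) * (1 - P/(P-1)) = -1" using p by (simp add: field_simps)
  have c2: "(P-1) * ((P-1)/P - 1) \<le> 0" using p by (simp add: field_simps)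
  have c3: "(P-N) * (1 - (P-N)/P) = N - N^2/P" using p by (simp add: field_simps power2_eq_square)
  have c4: "(P-N) * (P/(P-N) - 1) = N" using p by (simp add: field_simps)
  have "N^2/P \<ge> 0" using p by simp
  show ?thesis unfolding e using a1 a2 b1 b2 c1 c2 c3 c4 \<open>N^2/P \<ge> 0\<close> by (simp add: abs_le_iff)
qed

lemma K1_bound:
  fixes x N C :: real
  assumes C: "\<And>z. z \<ge> 1 \<Longrightarrow> \<bar>gS z\<bar> \<le> C" and x: "x > 0" and N: "N \<ge> 1" and xN: "x * N \<ge> 1"
  shows "\<bar>ln (Gamma (1+x)) - x * ln x + x - 1/2 * ln N - 1/2 * ln x\<bar> \<le> C + 6 + ln (x*N)"
proof -
  have g: "\<bar>gS (1+x)\<bar> \<le> C" using C x by simp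
  hence g1: "gS (1+x) \<le> C" "- gS (1+x) \<le> C" by auto
  have F: "ln (Gamma (1+x)) = ((1+x) - 1/2) * ln (1+x) - (1+x) + gS (1+x)" unfolding gS_def by simp
  have lxN: "ln (x*N) = ln x + ln N" using x N by (simp add: ln_mult_pos)
  have lxN0: "ln (x*N) \<ge> 0" using xN by simp
  show ?thesis
  proof (cases "x \<le> 1")
    case True
    have l1: "0 \<le> ln (1+x)" "ln (1+x) \<le> 1" using x True ln_le_minus_one[of "1+x"] by auto
    have "ln x \<ge> 1 - 1/x" using ln_diff_bounds(1)[of x 1] x by simp
    hence "x * ln x \<ge> x * (1 - 1/x)" using x by (intro mult_left_mono) auto
    moreover have "x * (1 - 1/x) = x - 1" using x by (simp add: field_simps)
    ultimately have xl1: "x * ln x \<ge> x - 1" by linarith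
    have xl2: "x * ln x \<le> 0" using x True by (simp add: mult_nonneg_nonpos)
    have "0 \<le> ((1+x) - 1/2) * ln (1+x)" "((1+x) - 1/2) * ln (1+x) \<le> 3/2"
      using l1 x True mult_mono[of "(1+x) - 1/2" "3/2" "ln (1+x)" 1] by auto
    then show ?thesis unfolding F abs_le_iff using g xl1 xl2 x True lxN lxN0 by linarith
  next
    case False
    have d1: "0 \<le> ln (1+x) - ln x" "ln (1+x) - ln x \<le> (1+x)/x - 1"
      using ln_diff_bounds(2)[of "1+x" x] x by auto
    have d2: "(1+x)/x - 1 = 1/x" using x by (simp add: field_simps)
    have "x * (ln (1+x) - ln x) \<le> x * (1/x)" using d1 d2 x by (intro mult_left_mono) auto
    hence d3: "x * (ln (1+x) - ln x) \<le> 1" using x by simp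
    have d4: "x * (ln (1+x) - ln x) \<ge> 0" using d1 x by simp
    have d5: "1/x \<le> 1" using False by simp
    have lx: "ln x \<ge> 0" using False by simp
    have e: "ln (Gamma (1+x)) - x * ln x + x - 1/2 * ln N - 1/2 * ln x
        = x * (ln (1+x) - ln x) + 1/2 * (ln (1+x) - ln x) - 1 + gS (1+x) - 1/2 * ln N"
      unfolding F by (simp add: algebra_simps)
    have lN: "ln N \<ge> 0" using N by simp
    have d6: "ln (1+x) - ln x \<le> 1" using d1 d2 d5 by linarith
    have key: "\<And>d t g a b :: real. 0 \<le> d \<Longrightarrow> d \<le> 1 \<Longrightarrow> t \<le> 1 \<Longrightarrow> 0 \<le> t \<Longrightarrow> g \<le> C \<Longrightarrow> - g \<le> C
      \<Longrightarrow> 0 \<le> a \<Longrightarrow> 0 \<le> b \<Longrightarrow> \<bar>t + 1/2 * d - 1 + g - 1/2 * b\<bar> \<le> C + 6 + (a + b)"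
      by (simp add: abs_le_iff)
    show ?thesis unfolding e lxN
      by (rule key[OF d1(1) d6 d3 d4 g1 lx lN])
  qed
qed

lemma sum7_bound:
  fixes a1 a2 a3 a4 a5 a6 a7 b1 b2 b3 b4 b5 b6 b7 :: real
  assumes "\<bar>a1\<bar> \<le> b1" "\<bar>a2\<bar> \<le> b2" "\<bar>a3\<bar> \<le> b3" "\<bar>a4\<bar> \<le> b4" "\<bar>a5\<bar> \<le> b5"
    "\<bar>a6\<bar> \<le> b6" "\<bar>a7\<bar> \<le> b7"
  shows "\<bar>a1 + a2 + a3 - a4 + a5 + a6 - a7\<bar> \<le> b1 + b2 + b3 + b4 + b5 + b6 + b7"
  using assms by (simp add: abs_le_iff)

lemma pointwise:
  fixes b C c :: real and n p1 p2 :: nat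
  assumes C: "\<And>z. z \<ge> 1 \<Longrightarrow> \<bar>gS z\<bar> \<le> C" and b: "b > 0" and n: "n \<ge> 1"
    and bn: "b * real n / 2 \<ge> 1" and p1: "p1 \<ge> n" and p2: "p2 \<ge> n"
    and c: "c > 0" "c \<le> real p2 / (real p1 + real p2)"
  shows "\<bar>ln (A_const b n p1 p2)
            - (b * real p1 / 2 * ln ((real p1 + real p2) / real p1)
             + b * real p2 / 2 * ln ((real p1 + real p2) / real p2)
             + b * (real n - 1) / 2 * ln ((real p1 + real p2) / real n)
             + 1/2 * ln (b * real p1)
             + 1/2 * b * real n)\<bar>
     \<le> (7*C + 8 + \<bar>ln c\<bar>) + b/2 + b/2 * (real n)^2/(real p1 + real p2) + b/2 * ln (real n)
        + ln (b * real n / 2)"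
proof -
  define x where "x = b/2"
  define N where "N = real n"
  define P1 where "P1 = real p1"
  define P2 where "P2 = real p2"
  define P where "P = P1 + P2"
  have hb: "b = 2*x" unfolding x_def by simp
  have x: "x > 0" using b x_def by simp
  have N: "N \<ge> 1" using n N_def by simp
  have hP1: "P1 \<ge> N" using p1 N_def P1_def by simp
  have hP2: "P2 \<ge> N" using p2 N_def P2_def by simp
  have xN: "x * N \<ge> 1" using bn unfolding x_def N_def by simp
  have ge1: "x*P \<ge> 1" "x*(P-1) \<ge> 1" "x*N \<ge> 1" "x*P1 \<ge> 1" "x*P2 \<ge> 1" "x*(P-N) \<ge> 1"
  proof -
    have "x*N \<le> x*P1" "x*N \<le> x*P2" "x*N \<le> x*P" "x*N \<le> x*(P-1)" "x*N \<le> x*(P-N)"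
      using x N hP1 hP2 P_def by (auto intro!: mult_left_mono)
    thus "x*P \<ge> 1" "x*(P-1) \<ge> 1" "x*N \<ge> 1" "x*P1 \<ge> 1" "x*P2 \<ge> 1" "x*(P-N) \<ge> 1"
      using xN by linarith+
  qed
  have pos: "x*P > 0" "x*(P-1) > 0" "x*N > 0" "x*P1 > 0" "x*P2 > 0" "x*(P-N) > 0" "1 + x > 0" "1 + x*N > 0"
    using ge1 x by linarith+
  have hA: "ln (A_const b n p1 p2) = ln (Gamma (1+x)) + ln (Gamma (x*P)) + ln (Gamma (x*(P-1)))
        - ln (Gamma (1 + x*N)) - ln (Gamma (x*P1)) - ln (Gamma (x*P2)) - ln (Gamma (x*(P-N)))"
  proof -
    have e: "b/2 = x" "b * P / 2 = x*P" "b * (P-1) / 2 = x*(P-1)" "b * N / 2 = x*N"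
      "b * P1 / 2 = x*P1" "b * P2 / 2 = x*P2" "b * (P-N) / 2 = x*(P-N)" unfolding hb by simp_all
    have "A_const b n p1 p2 = Gamma (1+x) * Gamma (x*P) * Gamma (x*(P-1)) /
      (Gamma (1 + x*N) * Gamma (x*P1) * Gamma (x*P2) * Gamma (x*(P-N)))"
      unfolding A_const_def Let_def N_def[symmetric] P1_def[symmetric] P2_def[symmetric] P_def[symmetric]
        e by simp
    also have "ln \<dots> = ln (Gamma (1+x)) + ln (Gamma (x*P)) + ln (Gamma (x*(P-1)))
        - (ln (Gamma (1 + x*N)) + ln (Gamma (x*P1)) + ln (Gamma (x*P2)) + ln (Gamma (x*(P-N))))"
      using pos by (simp add: ln_mult_pos ln_divide_pos)
    finally show ?thesis by simp
  qed
  have hG: "ln (Gamma (1 + x*N)) = ln (Gamma (x*N)) + ln (x*N)"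
  proof -
    have nz: "x*N \<notin> \<int>\<^sub>\<le>\<^sub>0" using pos by auto
    have "Gamma (x*N + 1) = x*N * Gamma (x*N)" using Gamma_plus1[OF nz] .
    thus ?thesis using pos by (simp add: ln_mult_pos add.commute)
  qed
  have hclaim: "b * real p1 / 2 * ln ((real p1 + real p2) / real p1)
             + b * real p2 / 2 * ln ((real p1 + real p2) / real p2)
             + b * (real n - 1) / 2 * ln ((real p1 + real p2) / real n)
             + 1/2 * ln (b * real p1)
             + 1/2 * b * real n
      = 2*x * P1 / 2 * ln (P / P1) + 2*x * P2 / 2 * ln (P / P2) + 2*x * (N - 1) / 2 * ln (P / N)
        + 1/2 * ln (2*x * P1) + 1/2 * (2*x) * N"
    unfolding hb N_def P1_def P2_def P_def by simp
  have D: "ln (A_const b n p1 p2) - (b * real p1 / 2 * ln ((real p1 + real p2) / real p1)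
             + b * real p2 / 2 * ln ((real p1 + real p2) / real p2)
             + b * (real n - 1) / 2 * ln ((real p1 + real p2) / real n)
             + 1/2 * ln (b * real p1)
             + 1/2 * b * real n)
     = (gS (x*P) + gS (x*(P-1)) - gS (x*N) - gS (x*P1) - gS (x*P2) - gS (x*(P-N)))
     + x * (((P-1) * ln (P-1) - (P-N) * ln (P-N) - (N-1) * ln P) - N)
     + (ln (Gamma (1+x)) - x * ln x + x - 1/2 * ln N - 1/2 * ln x)
     - x * ln N + 1/2 * ln (P2/P) + 1/2 * ln ((P-N)/(P-1)) - 1/2 * ln 2"
    unfolding hclaim hA hG[symmetric]
    using identity[OF x N hP1 hP2 P_def] hG by simp
  have B1: "\<bar>gS (x*P) + gS (x*(P-1)) - gS (x*N) - gS (x*P1) - gS (x*P2) - gS (x*(P-N))\<bar> \<le> 6*C"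
  proof -
    have "\<bar>gS (x*P)\<bar> \<le> C" "\<bar>gS (x*(P-1))\<bar> \<le> C" "\<bar>gS (x*N)\<bar> \<le> C" "\<bar>gS (x*P1)\<bar> \<le> C"
      "\<bar>gS (x*P2)\<bar> \<le> C" "\<bar>gS (x*(P-N))\<bar> \<le> C" using C ge1 by blast+
    thus ?thesis by (simp add: abs_le_iff)
  qed
  have B2: "\<bar>x * (((P-1) * ln (P-1) - (P-N) * ln (P-N) - (N-1) * ln P) - N)\<bar> \<le> x * (1 + N^2/P)"
  proof -
    have "P \<ge> 2*N" using hP1 hP2 P_def by simp
    hence "\<bar>((P-1) * ln (P-1) - (P-N) * ln (P-N) - (N-1) * ln P) - N\<bar> \<le> 1 + N^2/P"
      using W_bounds N by blast
    thus ?thesis using x by (simp add: abs_mult mult_left_mono)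
  qed
  have B3: "\<bar>ln (Gamma (1+x)) - x * ln x + x - 1/2 * ln N - 1/2 * ln x\<bar> \<le> C + 6 + ln (x*N)"
    using K1_bound[OF C x N xN] by simp
  have B4: "\<bar>x * ln N\<bar> \<le> x * ln N" using x N by simp
  have B5: "\<bar>1/2 * ln (P2/P)\<bar> \<le> \<bar>ln c\<bar>"
  proof -
    have q: "c \<le> P2/P" "P2/P \<le> 1" "P2/P > 0" using c hP1 hP2 N P_def P1_def P2_def by auto
    have "ln c \<le> ln (P2/P)" "ln (P2/P) \<le> 0" using q c by auto
    thus ?thesis by (simp add: abs_le_iff)
  qed
  have B6: "\<bar>1/2 * ln ((P-N)/(P-1))\<bar> \<le> 1"
  proof -
    have q: "1/2 \<le> (P-N)/(P-1)" "(P-N)/(P-1) \<le> 1" "0 < (P-N)/(P-1)" using hP1 hP2 N P_def by (auto simp: field_simps)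
    have "ln (1/2) \<le> ln ((P-N)/(P-1))" using q by (subst ln_le_cancel_iff) auto
    moreover have "ln ((P-N)/(P-1)) \<le> 0" using q by (subst ln_le_zero_iff) auto
    moreover have "ln (1/2::real) = - ln 2" by (simp add: ln_div)
    moreover have "ln (2::real) \<le> 1" using ln_le_minus_one[of 2] by simp
    ultimately show ?thesis by (simp add: abs_le_iff)
  qed
  have B7: "\<bar>1/2 * ln (2::real)\<bar> \<le> 1" using ln_le_minus_one[of 2] by simp
  have tot: "\<bar>ln (A_const b n p1 p2) - (b * real p1 / 2 * ln ((real p1 + real p2) / real p1)
             + b * real p2 / 2 * ln ((real p1 + real p2) / real p2)
             + b * (real n - 1) / 2 * ln ((real p1 + real p2) / real n)
             + 1/2 * ln (b * real p1)
             + 1/2 * b * real n)\<bar> \<le> 6*C + x * (1 + N^2/P) + (C + 6 + ln (x*N)) + x * ln N + \<bar>ln c\<bar> + 1 + 1"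
    unfolding D by (rule sum7_bound[OF B1 B2 B3 B4 B5 B6 B7])
  have "6*C + x * (1 + N^2/P) + (C + 6 + ln (x*N)) + x * ln N + \<bar>ln c\<bar> + 1 + 1
     = (7*C + 8 + \<bar>ln c\<bar>) + b/2 + b/2 * (real n)^2/(real p1 + real p2) + b/2 * ln (real n)
        + ln (b * real n / 2)"
    unfolding x_def N_def P_def P1_def P2_def by (simp add: algebra_simps)
  with tot show ?thesis by simp
qed



theorem lemma3:
  fixes \<beta> :: "nat \<Rightarrow> real" and p1 p2 :: "nat \<Rightarrow> nat" and \<sigma> :: real
  assumes beta_pos: "\<And>n. \<beta> n > 0"
    and p1_ge: "\<And>n. p1 n \<ge> n"
    and p2_ge: "\<And>n. p2 n \<ge> n"
    and lim1: "(\<lambda>n. real n / real (p1 n)) \<longlonglongrightarrow> 0"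
    and sigma_nonneg: "\<sigma> \<ge> 0"
    and lim2: "(\<lambda>n. real (p1 n) / real (p2 n)) \<longlonglongrightarrow> \<sigma>"
    and lim3: "filterlim (\<lambda>n. \<beta> n * real n) at_top sequentially"
  shows "(\<lambda>n. ln (A_const (\<beta> n) n (p1 n) (p2 n))
            - (\<beta> n * real (p1 n) / 2 * ln ((real (p1 n) + real (p2 n)) / real (p1 n))
             + \<beta> n * real (p2 n) / 2 * ln ((real (p1 n) + real (p2 n)) / real (p2 n))
             + \<beta> n * (real n - 1) / 2 * ln ((real (p1 n) + real (p2 n)) / real n)
             + 1/2 * ln (\<beta> n * real (p1 n))
             + 1/2 * \<beta> n * real n))
         \<in> o(\<lambda>n. \<beta> n * real n)"
    (is "?D \<in> _")
proof -
  obtain C where C: "\<And>z. z \<ge> 1 \<Longrightarrow> \<bar>gS z\<bar> \<le> C" using gS_bounded by blast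
  have C0: "C \<ge> 0" using C[of 1] by simp
  define c where "c = 1 / (\<sigma> + 2)"
  have c0: "c > 0" using sigma_nonneg c_def by simp
  define K where "K = 7*C + 8 + \<bar>ln c\<bar>"
  define bnd where "bnd = (\<lambda>n. K + \<beta> n/2 + \<beta> n/2 * (real n)^2/(real (p1 n) + real (p2 n))
        + \<beta> n/2 * ln (real n) + ln (\<beta> n * real n / 2))"
  have ev1: "eventually (\<lambda>n. n \<ge> 1) sequentially" by (rule eventually_ge_at_top)
  have ev2: "eventually (\<lambda>n. \<beta> n * real n \<ge> 2) sequentially"
    using lim3 by (simp add: filterlim_at_top)
  have ev3: "eventually (\<lambda>n. real (p1 n) / real (p2 n) < \<sigma> + 1) sequentially"
    using lim2 by (rule order_tendstoD) simp
  have evb: "eventually (\<lambda>n. \<bar>?D n\<bar> \<le> bnd n) sequentially"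
    using ev1 ev2 ev3
  proof eventually_elim
    case (elim n)
    have p2p: "real (p2 n) > 0" using p2_ge[of n] elim(1) by simp
    have "real (p1 n) < (\<sigma> + 1) * real (p2 n)" using elim(3) p2p by (simp add: field_simps)
    hence "c \<le> real (p2 n) / (real (p1 n) + real (p2 n))"
      unfolding c_def using p2p sigma_nonneg by (simp add: field_simps)
    moreover have "\<beta> n * real n / 2 \<ge> 1" using elim(2) by simp
    ultimately show ?case unfolding bnd_def K_def
      using pointwise[OF C beta_pos[of n] elim(1) _ p1_ge[of n] p2_ge[of n] c0] by simp
  qed
  have inf: "filterlim (\<lambda>n. \<beta> n * real n) at_infinity sequentially"
    using lim3 filterlim_at_top_imp_at_infinity by blast
  have t1: "(\<lambda>n. K / (\<beta> n * real n)) \<longlonglongrightarrow> 0"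
    by (rule tendsto_divide_0[OF tendsto_const inf])
  have t2: "(\<lambda>n. 1 / (2 * real n)) \<longlonglongrightarrow> 0" by real_asymp
  have t3: "(\<lambda>n. real n / (2 * (real (p1 n) + real (p2 n)))) \<longlonglongrightarrow> 0"
  proof (rule Lim_null_comparison[OF _ lim1])
    show "eventually (\<lambda>n. norm (real n / (2 * (real (p1 n) + real (p2 n)))) \<le> real n / real (p1 n)) sequentially"
      using ev1
    proof eventually_elim
      case (elim n)
      have "real (p1 n) > 0" using p1_ge[of n] elim by simp
      thus ?case by (simp add: field_simps)
    qed
  qed
  have t4: "(\<lambda>n. ln (real n) / (2 * real n)) \<longlonglongrightarrow> 0" by real_asymp
  have t5': "((\<lambda>t::real. ln (t/2) / t) \<longlongrightarrow> 0) at_top" by real_asymp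
  have t5: "(\<lambda>n. ln (\<beta> n * real n / 2) / (\<beta> n * real n)) \<longlonglongrightarrow> 0"
    using filterlim_compose[OF t5' lim3] by (simp add: o_def)
  have tsum: "(\<lambda>n. K / (\<beta> n * real n) + 1 / (2 * real n) + real n / (2 * (real (p1 n) + real (p2 n)))
     + ln (real n) / (2 * real n) + ln (\<beta> n * real n / 2) / (\<beta> n * real n)) \<longlonglongrightarrow> 0"
    using tendsto_add[OF tendsto_add[OF tendsto_add[OF tendsto_add[OF t1 t2] t3] t4] t5] by simp
  have "(\<lambda>n. ?D n / (\<beta> n * real n)) \<longlonglongrightarrow> 0"
  proof (rule Lim_null_comparison[OF _ tsum])
    show "eventually (\<lambda>n. norm (?D n / (\<beta> n * real n)) \<le> K / (\<beta> n * real n) + 1 / (2 * real n)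
       + real n / (2 * (real (p1 n) + real (p2 n)))
       + ln (real n) / (2 * real n) + ln (\<beta> n * real n / 2) / (\<beta> n * real n)) sequentially"
      using evb ev1
    proof eventually_elim
      case (elim n)
      have bp: "\<beta> n * real n > 0" using beta_pos[of n] elim(2) by simp
      have "norm (?D n / (\<beta> n * real n)) = \<bar>?D n\<bar> / (\<beta> n * real n)"
        using bp by (simp add: abs_div)
      also have "\<dots> \<le> bnd n / (\<beta> n * real n)"
        using elim(1) bp by (intro divide_right_mono) auto
      also have "bnd n / (\<beta> n * real n) = K / (\<beta> n * real n) + 1 / (2 * real n)
       + real n / (2 * (real (p1 n) + real (p2 n)))
       + ln (real n) / (2 * real n) + ln (\<beta> n * real n / 2) / (\<beta> n * real n)"
        unfolding bnd_def using bp beta_pos[of n] elim(2)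
        by (simp add: field_simps power2_eq_square)
      finally show ?case .
    qed
  qed
  thus ?thesis
  proof (rule smalloI_tendsto)
    show "eventually (\<lambda>n. \<beta> n * real n \<noteq> 0) sequentially"
      using ev1
    proof eventually_elim
      case (elim n)
      show ?case using beta_pos[of n] elim by simp
    qed
  qed
qed

end
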